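(* (Non-analyticity of the rotated-scheme strain Green operator along the line $L_{100}$.) Let $q_1\in\mathbb{R}$ with $q_1\notin\pi+2\pi\mathbb{Z}$, let $\theta\in\mathbb{R}$ and $n=(0,\cos\theta,\sin\theta)$. Then $$\lim_{\epsilon\to0^+}G^{rot}\big(q_1,\ \pi+\epsilon\sin\theta,\ \pi+\epsilon\cos\theta\big)=\Gamma(n).$$ In particular, if $\lambda^0$ is isotropic, $\lambda^0_{ijkl}=\lambda\delta_{ij}\delta_{kl}+\mu(\delta_{ik}\delta_{jl}+\delta_{il}\delta_{jk})$ with $\mu>0$, $3\lambda+2\mu>0$, and $\nu=\lambda/(2(\lambda+\mu))$, then $$\lim_{\epsilon\to0^+}G^{rot}_{2223}\big(q_1,\pi+\epsilon\sin\theta,\pi+\epsilon\cos\theta\big)=\frac{\cos\theta\sin\theta}{2\mu}\Big(1-\frac{\cos^2\theta}{1-\nu}\Big),$$ which depends on $\theta$; hence $G^{rot}_{2223}$ admits no continuous extension to any point $(q_1,\pi,\pi)$ with $q_1\notin\pi+2\pi\mathbb{Z}$.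
   Context: Rotated scheme: for $q\in\mathbb{R}^3$, $D^{rot}_1(q)=\frac14(e^{iq_1}-1)(e^{iq_2}+1)(e^{iq_3}+1)$, $D^{rot}_2(q)=\frac14(e^{iq_1}+1)(e^{iq_2}-1)(e^{iq_3}+1)$, $D^{rot}_3(q)=\frac14(e^{iq_1}+1)(e^{iq_2}+1)(e^{iq_3}-1)$. $\lambda^0$ is a constant fourth-order tensor with minor and major symmetries, positive definite on real symmetric matrices. $M^{rot}_{jk}(q)=\sum_{i,l}\overline{D^{rot}_i}\lambda^0_{ijkl}D^{rot}_l$, invertible whenever $D^{rot}(q)\ne0$, and $\Omega^{rot}(q)=M^{rot}(q)^{-1}$ there. Strain Green operator (defined where $D^{rot}(q)\neq 0$): $G^{rot}_{ijkl}=\frac14\{D_i\Omega_{jk}\overline{D_l}+D_j\Omega_{ik}\overline{D_l}+D_i\Omega_{jl}\overline{D_k}+D_j\Omega_{il}\overline{D_k}\}$ with $D=D^{rot}(q)$, $\Omega=\Omega^{rot}(q)$. For a nonzero real vector $n$, the acoustic tensor is $K(n)_{jk}=\sum_{i,l}\lambda^0_{ijkl}n_in_l$ and the continuum Green operator is $\Gamma_{ijkl}(n)=\frac14\{n_iK^{-1}_{jk}n_l+n_jK^{-1}_{ik}n_l+n_iK^{-1}_{jl}n_k+n_jK^{-1}_{il}n_k\}$ with $K^{-1}=K(n)^{-1}$. *)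

theory Defs
  imports "HOL-Analysis.Analysis"
begin

text \<open>Indices 1,2,3 are elements of the numeral type 3 (where the numeral 3 denotes
  the third index). Tensors are functions of four indices.\<close>

type_synonym tensor4 = "3 \<Rightarrow> 3 \<Rightarrow> 3 \<Rightarrow> 3 \<Rightarrow> real"

definition tensor_minor_sym :: "tensor4 \<Rightarrow> bool" where
  "tensor_minor_sym L \<longleftrightarrow> (\<forall>i j k l. L i j k l = L j i k l \<and> L i j k l = L i j l k)"

definition tensor_major_sym :: "tensor4 \<Rightarrow> bool" where
  "tensor_major_sym L \<longleftrightarrow> (\<forall>i j k l. L i j k l = L k l i j)"

definition tensor_pos_def_sym :: "tensor4 \<Rightarrow> bool" where
  "tensor_pos_def_sym L \<longleftrightarrow>
     (\<forall>e :: real^3^3. transpose e = e \<and> e \<noteq> 0 \<longrightarrow>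
        (\<Sum>i\<in>UNIV. \<Sum>j\<in>UNIV. \<Sum>k\<in>UNIV. \<Sum>l\<in>UNIV. e$i$j * L i j k l * e$k$l) > 0)"

definition Drot :: "real^3 \<Rightarrow> complex^3" where
  "Drot q = vector
     [ (exp (\<i> * of_real (q$1)) - 1) * (exp (\<i> * of_real (q$2)) + 1) * (exp (\<i> * of_real (q$3)) + 1) / 4,
       (exp (\<i> * of_real (q$1)) + 1) * (exp (\<i> * of_real (q$2)) - 1) * (exp (\<i> * of_real (q$3)) + 1) / 4,
       (exp (\<i> * of_real (q$1)) + 1) * (exp (\<i> * of_real (q$2)) + 1) * (exp (\<i> * of_real (q$3)) - 1) / 4 ]"

definition Mrot :: "tensor4 \<Rightarrow> real^3 \<Rightarrow> complex^3^3" where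
  "Mrot L q = (\<chi> j k. \<Sum>i\<in>UNIV. \<Sum>l\<in>UNIV. cnj (Drot q $ i) * of_real (L i j k l) * Drot q $ l)"

definition Omegarot :: "tensor4 \<Rightarrow> real^3 \<Rightarrow> complex^3^3" where
  "Omegarot L q = matrix_inv (Mrot L q)"

text \<open>Strain Green operator of the rotated scheme (meaningful where Drot q \<noteq> 0).\<close>
definition Grot :: "tensor4 \<Rightarrow> real^3 \<Rightarrow> 3 \<Rightarrow> 3 \<Rightarrow> 3 \<Rightarrow> 3 \<Rightarrow> complex" where
  "Grot L q i j k l =
     (let D = Drot q; \<Omega> = Omegarot L q in
      (D$i * \<Omega>$j$k * cnj (D$l) + D$j * \<Omega>$i$k * cnj (D$l)
       + D$i * \<Omega>$j$l * cnj (D$k) + D$j * \<Omega>$i$l * cnj (D$k)) / 4)"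

definition acoustic :: "tensor4 \<Rightarrow> real^3 \<Rightarrow> real^3^3" where
  "acoustic L n = (\<chi> j k. \<Sum>i\<in>UNIV. \<Sum>l\<in>UNIV. L i j k l * n$i * n$l)"

text \<open>Continuum Green operator (meaningful for n \<noteq> 0).\<close>
definition Gamma_op :: "tensor4 \<Rightarrow> real^3 \<Rightarrow> 3 \<Rightarrow> 3 \<Rightarrow> 3 \<Rightarrow> 3 \<Rightarrow> real" where
  "Gamma_op L n i j k l =
     (let Ki = matrix_inv (acoustic L n) in
      (n$i * Ki$j$k * n$l + n$j * Ki$i$k * n$l + n$i * Ki$j$l * n$k + n$j * Ki$i$l * n$k) / 4)"

definition isotropic_tensor :: "real \<Rightarrow> real \<Rightarrow> tensor4" where
  "isotropic_tensor lam mu = (\<lambda>i j k l.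
      lam * (if i = j then 1 else 0) * (if k = l then 1 else 0)
      + mu * ((if i = k then 1 else 0) * (if j = l then 1 else 0)
              + (if i = l then 1 else 0) * (if j = k then 1 else 0)))"

end

theory Submission
  imports Defs
begin


definition inv3 :: "'a::field^3^3 \<Rightarrow> 'a^3^3" where
"inv3 A = vector [
  vector [A$2$2*A$3$3 - A$2$3*A$3$2, A$1$3*A$3$2 - A$1$2*A$3$3, A$1$2*A$2$3 - A$1$3*A$2$2],
  vector [A$2$3*A$3$1 - A$2$1*A$3$3, A$1$1*A$3$3 - A$1$3*A$3$1, A$1$3*A$2$1 - A$1$1*A$2$3],
  vector [A$2$1*A$3$2 - A$2$2*A$3$1, A$1$2*A$3$1 - A$1$1*A$3$2, A$1$1*A$2$2 - A$1$2*A$2$1]]"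

lemma matrix_inv_unique:
  fixes A :: "'a::semiring_1^'n^'n"
  assumes "A ** B = mat 1" "B ** A = mat 1"
  shows "matrix_inv A = B"
proof -
  have "\<exists>X. A ** X = mat 1 \<and> X ** A = mat 1" using assms by blast
  hence X: "A ** matrix_inv A = mat 1 \<and> matrix_inv A ** A = mat 1"
    unfolding matrix_inv_def by (rule someI_ex)
  have "matrix_inv A = matrix_inv A ** (A ** B)" using assms by simp
  also have "\<dots> = B" using X by (simp add: matrix_mul_assoc)
  finally show ?thesis .
qed

lemma inv3_adj:
  fixes A :: "'a::field^3^3"
  shows "(\<Sum>k\<in>UNIV. A$i$k * inv3 A $ k $ j) = (if i = j then det A else 0)"
proof -
  have "\<And>i j. i \<in> {1,2,3::3} \<Longrightarrow> j \<in> {1,2,3::3} \<Longrightarrow> (\<Sum>k\<in>UNIV. A$i$k * inv3 A $ k $ j) = (if i = j then det A else 0)"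
    unfolding sum_3 inv3_def det_3 by (auto simp: algebra_simps)
  thus ?thesis using UNIV_3 by blast
qed

lemma inv3_right:
  fixes A :: "'a::field^3^3"
  assumes "det A \<noteq> 0"
  shows "A ** (\<chi> i j. inv3 A $ i $ j / det A) = mat 1"
proof -
  have "(\<Sum>k\<in>UNIV. A$i$k * (inv3 A $ k $ j / det A)) = (if i = j then 1 else 0)" for i j
  proof -
    have "(\<Sum>k\<in>UNIV. A$i$k * (inv3 A $ k $ j / det A)) = (\<Sum>k\<in>UNIV. A$i$k * inv3 A $ k $ j) / det A"
      by (simp add: sum_divide_distrib)
    thus ?thesis using assms by (simp add: inv3_adj)
  qed
  thus ?thesis by (simp add: matrix_matrix_mult_def mat_def vec_eq_iff)
qed

lemma matrix_inv3:
  fixes A :: "'a::field^3^3"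
  assumes "det A \<noteq> 0"
  shows "matrix_inv A = (\<chi> i j. inv3 A $ i $ j / det A)"
  using inv3_right[OF assms] matrix_left_right_inverse matrix_inv_unique by blast




lemma sym_trick:
  fixes a b :: "'i \<Rightarrow> real"
  assumes "\<And>i j. F i j = F j i"
  shows "(\<Sum>i\<in>A. \<Sum>j\<in>A. (a i * b j + a j * b i) * F i j) = 2 * (\<Sum>i\<in>A. \<Sum>j\<in>A. a i * b j * F i j)"
proof -
  have "(\<Sum>i\<in>A. \<Sum>j\<in>A. a j * b i * F i j) = (\<Sum>j\<in>A. \<Sum>i\<in>A. a j * b i * F i j)"
    by (rule sum.swap)
  also have "\<dots> = (\<Sum>j\<in>A. \<Sum>i\<in>A. a j * b i * F j i)"
    by (intro sum.cong refl) (metis assms)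
  finally have *: "(\<Sum>i\<in>A. \<Sum>j\<in>A. a j * b i * F i j) = (\<Sum>i\<in>A. \<Sum>j\<in>A. a i * b j * F i j)" .
  have "(\<Sum>i\<in>A. \<Sum>j\<in>A. (a i * b j + a j * b i) * F i j)
     = (\<Sum>i\<in>A. \<Sum>j\<in>A. a i * b j * F i j) + (\<Sum>i\<in>A. \<Sum>j\<in>A. a j * b i * F i j)"
    by (simp add: algebra_simps sum.distrib)
  then show ?thesis using * by simp
qed

lemma acoustic_det:
  fixes L :: tensor4 and n :: "real^3"
  assumes minor: "tensor_minor_sym L" and posdef: "tensor_pos_def_sym L" and n0: "n \<noteq> 0"
  shows "det (acoustic L n) \<noteq> 0"
proof -
  let ?K = "acoustic L n"
  have m1: "L i j k l = L j i k l" and m2: "L i j k l = L i j l k" for i j k l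
    using minor unfolding tensor_minor_sym_def by auto
  have ker: "v = 0" if Kv: "?K *v v = 0" for v
  proof (rule ccontr)
    assume v0: "v \<noteq> 0"
    define e :: "real^3^3" where "e = (\<chi> i j. n$i * v$j + n$j * v$i)"
    have te: "transpose e = e" unfolding e_def transpose_def by (simp add: vec_eq_iff)
    have ne: "e \<noteq> 0"
    proof
      assume e0: "e = 0"
      obtain i where ni: "n$i \<noteq> 0" using n0 by (metis vec_eq_iff zero_index)
      have "e$i$i = 0" "e$i$j = 0" for j using e0 by simp_all
      hence ii: "n$i * v$i + n$i * v$i = 0" and ij: "n$i * v$j + n$j * v$i = 0" for j unfolding e_def by simp_all
      have "v$i = 0" using ii ni by simp
      hence "v$j = 0" for j using ij[of j] ni by simp
      thus False using v0 by (simp add: vec_eq_iff)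
    qed
    define Q where "Q i j = (\<Sum>k\<in>UNIV. \<Sum>l\<in>UNIV. L i j k l * (n$k * v$l))" for i j
    have Qs: "Q i j = Q j i" for i j unfolding Q_def by (intro sum.cong refl) (rule arg_cong[where f="\<lambda>x. x * _"], rule m1)
    have inner: "(\<Sum>k\<in>UNIV. \<Sum>l\<in>UNIV. e$i$j * L i j k l * e$k$l) = 2 * e$i$j * Q i j" for i j
    proof -
      have "(\<Sum>k\<in>UNIV. \<Sum>l\<in>UNIV. e$i$j * L i j k l * e$k$l) = e$i$j * (\<Sum>k\<in>UNIV. \<Sum>l\<in>UNIV. (n$k * v$l + n$l * v$k) * L i j k l)"
        unfolding e_def by (simp add: sum_distrib_left mult_ac)
      also have "\<dots> = e$i$j * (2 * (\<Sum>k\<in>UNIV. \<Sum>l\<in>UNIV. n$k * v$l * L i j k l))"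
        by (subst sym_trick[where F="L i j"]) (auto intro: m2)
      finally show ?thesis unfolding Q_def by (simp add: mult_ac)
    qed
    have S: "(\<Sum>i\<in>UNIV. \<Sum>j\<in>UNIV. \<Sum>k\<in>UNIV. \<Sum>l\<in>UNIV. e$i$j * L i j k l * e$k$l)
        = 4 * (\<Sum>i\<in>UNIV. \<Sum>j\<in>UNIV. n$i * v$j * Q i j)"
    proof -
      have "(\<Sum>i\<in>UNIV. \<Sum>j\<in>UNIV. \<Sum>k\<in>UNIV. \<Sum>l\<in>UNIV. e$i$j * L i j k l * e$k$l)
          = 2 * (\<Sum>i\<in>UNIV. \<Sum>j\<in>UNIV. (n$i * v$j + n$j * v$i) * Q i j)"
        unfolding inner by (simp add: sum_distrib_left e_def algebra_simps)
      also have "\<dots> = 4 * (\<Sum>i\<in>UNIV. \<Sum>j\<in>UNIV. n$i * v$j * Q i j)"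
        by (subst sym_trick[where F=Q]) (auto intro: Qs)
      finally show ?thesis .
    qed
    have R: "(\<Sum>i\<in>UNIV. \<Sum>j\<in>UNIV. n$i * v$j * Q i j) = v \<bullet> (?K *v v)"
    proof -
      have "(\<Sum>i\<in>UNIV. \<Sum>j\<in>UNIV. n$i * v$j * Q i j) = (\<Sum>i\<in>UNIV. \<Sum>j\<in>UNIV. \<Sum>k\<in>UNIV. \<Sum>l\<in>UNIV. v$j * v$k * (L i j k l * n$i * n$l))"
        unfolding Q_def sum_distrib_left
      proof (rule sum.cong[OF refl], rule sum.cong[OF refl])
        fix i j
        have "(\<Sum>k\<in>UNIV. \<Sum>l\<in>UNIV. n$i * v$j * (L i j k l * (n$k * v$l))) = (\<Sum>l\<in>UNIV. \<Sum>k\<in>UNIV. n$i * v$j * (L i j k l * (n$k * v$l)))"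
          by (rule sum.swap)
        also have "\<dots> = (\<Sum>k\<in>UNIV. \<Sum>l\<in>UNIV. v$j * v$k * (L i j k l * n$i * n$l))"
          by (intro sum.cong refl) (subst m2, simp add: mult_ac)
        finally show "(\<Sum>k\<in>UNIV. \<Sum>l\<in>UNIV. n$i * v$j * (L i j k l * (n$k * v$l))) = (\<Sum>k\<in>UNIV. \<Sum>l\<in>UNIV. v$j * v$k * (L i j k l * n$i * n$l))" .
      qed
      also have "\<dots> = (\<Sum>j\<in>UNIV. \<Sum>i\<in>UNIV. \<Sum>k\<in>UNIV. \<Sum>l\<in>UNIV. v$j * v$k * (L i j k l * n$i * n$l))"
        by (rule sum.swap)
      also have "\<dots> = (\<Sum>j\<in>UNIV. \<Sum>k\<in>UNIV. \<Sum>i\<in>UNIV. \<Sum>l\<in>UNIV. v$j * v$k * (L i j k l * n$i * n$l))"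
        by (rule sum.cong[OF refl], rule sum.swap)
      also have "\<dots> = v \<bullet> (?K *v v)"
        unfolding acoustic_def inner_vec_def matrix_vector_mult_def
        by (simp add: sum_distrib_left sum_distrib_right mult_ac)
      finally show ?thesis .
    qed
    have "(\<Sum>i\<in>UNIV. \<Sum>j\<in>UNIV. \<Sum>k\<in>UNIV. \<Sum>l\<in>UNIV. e$i$j * L i j k l * e$k$l) > 0"
      using posdef te ne unfolding tensor_pos_def_sym_def by blast
    thus False using S R Kv by simp
  qed
  have "\<exists>B. B ** ?K = mat 1" unfolding matrix_left_invertible_ker using ker by blast
  thus ?thesis using invertible_det_nz invertible_left_inverse by blast
qed




definition Mw :: "tensor4 \<Rightarrow> complex^3 \<Rightarrow> complex^3^3" where
 "Mw L W = (\<chi> j k. \<Sum>i\<in>UNIV. \<Sum>l\<in>UNIV. cnj (W$i) * of_real (L i j k l) * W$l)"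

definition Gw :: "tensor4 \<Rightarrow> complex^3 \<Rightarrow> 3 \<Rightarrow> 3 \<Rightarrow> 3 \<Rightarrow> 3 \<Rightarrow> complex" where
 "Gw L W i j k l = (let \<Omega> = matrix_inv (Mw L W) in
    (W$i * \<Omega>$j$k * cnj (W$l) + W$j * \<Omega>$i$k * cnj (W$l) + W$i * \<Omega>$j$l * cnj (W$k) + W$j * \<Omega>$i$l * cnj (W$k)) / 4)"

lemma Grot_Gw: "Grot L q i j k l = Gw L (Drot q) i j k l"
  unfolding Grot_def Gw_def Omegarot_def Mrot_def Mw_def Let_def by simp

lemma matrix_inv_right:
  fixes A :: "'a::field^3^3"
  assumes "det A \<noteq> 0"
  shows "A ** matrix_inv A = mat 1"
  using inv3_right[OF assms] matrix_inv3[OF assms] by simp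

lemma matrix_inv_scale:
  fixes A :: "'a::field^3^3"
  assumes "det A \<noteq> 0" "r \<noteq> 0"
  shows "matrix_inv (\<chi> j k. r * A$j$k) = (\<chi> j k. matrix_inv A $ j $ k / r)"
proof -
  let ?X = "matrix_inv A"
  have AX: "A ** ?X = mat 1" by (rule matrix_inv_right[OF assms(1)])
  have "(\<chi> j k. r * A$j$k) ** (\<chi> j k. ?X $ j $ k / r) = A ** ?X"
    unfolding matrix_matrix_mult_def using assms(2)
    by (simp add: vec_eq_iff)
  hence "(\<chi> j k. r * A$j$k) ** (\<chi> j k. ?X $ j $ k / r) = mat 1" using AX by simp
  thus ?thesis using matrix_left_right_inverse matrix_inv_unique by blast
qed

lemma Mw_scale: "Mw L (\<chi> m. c * W$m) = (\<chi> j k. (cnj c * c) * Mw L W $ j $ k)"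
  unfolding Mw_def by (simp add: vec_eq_iff sum_distrib_left mult_ac)

lemma Gw_scale:
  assumes "c \<noteq> 0" "det (Mw L W) \<noteq> 0"
  shows "Gw L (\<chi> m. c * W$m) i j k l = Gw L W i j k l"
proof -
  have r: "cnj c * c \<noteq> 0" using assms by simp
  have "matrix_inv (Mw L (\<chi> m. c * W$m)) = (\<chi> j k. matrix_inv (Mw L W) $ j $ k / (cnj c * c))"
    unfolding Mw_scale by (rule matrix_inv_scale[OF assms(2) r])
  thus ?thesis unfolding Gw_def Let_def using assms(1)
    by (simp add: field_simps)
qed



lemma inv3_tendsto:
  assumes "\<And>a b. ((\<lambda>x. A x $ a $ b) \<longlongrightarrow> A0 $ a $ b) F"
  shows "((\<lambda>x. inv3 (A x) $ j $ k :: 'a::{field,real_normed_field}) \<longlongrightarrow> inv3 A0 $ j $ k) F"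
proof -
  have "\<forall>j k. ((\<lambda>x. inv3 (A x) $ j $ k :: 'a) \<longlongrightarrow> inv3 A0 $ j $ k) F"
    unfolding forall_3 inv3_def by (simp; safe; auto intro!: tendsto_intros assms)
  thus ?thesis by blast
qed

lemma det_tendsto:
  assumes "\<And>a b. ((\<lambda>x. A x $ a $ b) \<longlongrightarrow> A0 $ a $ b) F"
  shows "((\<lambda>x. det (A x :: 'a::{field,real_normed_field}^3^3)) \<longlongrightarrow> det A0) F"
  unfolding det_3 by (auto intro!: tendsto_intros assms)

lemma Mw_tendsto:
  assumes "\<And>m. ((\<lambda>x. W x $ m) \<longlongrightarrow> W0 $ m) F"
  shows "((\<lambda>x. Mw L (W x) $ a $ b) \<longlongrightarrow> Mw L W0 $ a $ b) F"
  unfolding Mw_def by (auto intro!: tendsto_intros assms)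

lemma det_Mw_eventually:
  assumes "\<And>m. ((\<lambda>x. W x $ m) \<longlongrightarrow> W0 $ m) F" "det (Mw L W0) \<noteq> 0"
  shows "eventually (\<lambda>x. det (Mw L (W x)) \<noteq> 0) F"
  using tendsto_imp_eventually_ne[OF det_tendsto[OF Mw_tendsto[OF assms(1)]] assms(2)] .

lemma Gw_tendsto:
  assumes W: "\<And>m. ((\<lambda>x. W x $ m) \<longlongrightarrow> W0 $ m) F" and d: "det (Mw L W0) \<noteq> 0"
  shows "((\<lambda>x. Gw L (W x) i j k l) \<longlongrightarrow> Gw L W0 i j k l) F"
proof -
  have Om: "((\<lambda>x. matrix_inv (Mw L (W x)) $ a $ b) \<longlongrightarrow> matrix_inv (Mw L W0) $ a $ b) F" for a b
  proof -
    have "((\<lambda>x. inv3 (Mw L (W x)) $ a $ b / det (Mw L (W x))) \<longlongrightarrow> inv3 (Mw L W0) $ a $ b / det (Mw L W0)) F"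
      by (intro tendsto_divide inv3_tendsto det_tendsto Mw_tendsto W d)
    hence "((\<lambda>x. inv3 (Mw L (W x)) $ a $ b / det (Mw L (W x))) \<longlongrightarrow> matrix_inv (Mw L W0) $ a $ b) F"
      by (simp add: matrix_inv3[OF d])
    moreover have "eventually (\<lambda>x. inv3 (Mw L (W x)) $ a $ b / det (Mw L (W x)) = matrix_inv (Mw L (W x)) $ a $ b) F"
      using det_Mw_eventually[OF W d] by eventually_elim (simp add: matrix_inv3)
    ultimately show ?thesis by (rule Lim_transform_eventually)
  qed
  show ?thesis unfolding Gw_def Let_def
    by (intro tendsto_intros W Om) simp
qed




lemma E_shift: "exp (\<i> * complex_of_real (pi + x)) = - exp (\<i> * complex_of_real x)"
  by (simp add: distrib_left exp_add)

lemma ofreal_at_right: "filterlim (\<lambda>\<epsilon>::real. complex_of_real \<epsilon>) (at 0) (at_right 0)"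
proof (rule filterlim_atI)
  show "((\<lambda>\<epsilon>::real. complex_of_real \<epsilon>) \<longlongrightarrow> 0) (at_right 0)"
    by (auto intro!: tendsto_eq_intros)
  show "\<forall>\<^sub>F x in at_right 0. complex_of_real x \<noteq> 0"
    using eventually_at_right_less[of "0::real"] by eventually_elim auto
qed

lemma u_lim: "((\<lambda>\<epsilon>. (1 - exp (\<i> * complex_of_real (\<epsilon> * s))) / complex_of_real \<epsilon>) \<longlongrightarrow> - (\<i> * complex_of_real s)) (at_right 0)"
proof -
  have d: "((\<lambda>y::complex. exp (\<i> * (y * complex_of_real s))) has_field_derivative \<i> * complex_of_real s) (at 0)"
    by (auto intro!: derivative_eq_intros)
  hence "((\<lambda>y. (exp (\<i> * (y * complex_of_real s)) - 1) / y) \<longlongrightarrow> \<i> * complex_of_real s) (at 0)"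
    unfolding has_field_derivative_iff by simp
  from filterlim_compose[OF this ofreal_at_right]
  have "((\<lambda>\<epsilon>. (exp (\<i> * (complex_of_real \<epsilon> * complex_of_real s)) - 1) / complex_of_real \<epsilon>) \<longlongrightarrow> \<i> * complex_of_real s) (at_right 0)"
    by (simp add: o_def)
  from tendsto_minus[OF this] show ?thesis
    by (simp add: minus_divide_left)
qed

lemma E_lim: "((\<lambda>\<epsilon>. exp (\<i> * complex_of_real (\<epsilon> * s))) \<longlongrightarrow> 1) (at_right 0)"
proof -
  have "((\<lambda>\<epsilon>. exp (\<i> * complex_of_real (\<epsilon> * s))) \<longlongrightarrow> exp (\<i> * complex_of_real (0 * s))) (at_right 0)"
    by (intro tendsto_intros tendsto_ident_at)
  thus ?thesis by simp
qed

lemma exp_ne_m1: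
  assumes q1: "\<forall>m::int. q1 \<noteq> pi + 2 * pi * of_int m"
  shows "exp (\<i> * complex_of_real q1) + 1 \<noteq> 0"
proof
  assume "exp (\<i> * complex_of_real q1) + 1 = 0"
  hence "exp (\<i> * complex_of_real q1) = -1" by (simp add: eq_neg_iff_add_eq_0)
  hence "Re (exp (\<i> * complex_of_real q1)) = -1" by simp
  hence "cos q1 = -1" by (simp add: Re_exp)
  then obtain n :: int where "q1 = (2 * real_of_int n + 1) * pi" using cos_eq_minus1 by blast
  hence "q1 = pi + 2 * pi * of_int n" by (simp add: algebra_simps)
  thus False using q1 by blast
qed




definition qv :: "real \<Rightarrow> real \<Rightarrow> real \<Rightarrow> real^3" where
  "qv q1 \<theta> \<epsilon> = vector [q1, pi + \<epsilon> * sin \<theta>, pi + \<epsilon> * cos \<theta>]"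

definition Wv :: "real \<Rightarrow> real \<Rightarrow> real \<Rightarrow> complex^3" where
  "Wv q1 \<theta> \<epsilon> = (let z = exp (\<i> * complex_of_real q1); c = (z + 1) * \<i> / 2;
      Es = exp (\<i> * complex_of_real (\<epsilon> * sin \<theta>)); Et = exp (\<i> * complex_of_real (\<epsilon> * cos \<theta>)) in
     vector [ (z - 1) * ((1 - Es) / complex_of_real \<epsilon>) * (1 - Et) / (4 * c),
              (z + 1) * (-1 - Es) * ((1 - Et) / complex_of_real \<epsilon>) / (4 * c),
              (z + 1) * ((1 - Es) / complex_of_real \<epsilon>) * (-1 - Et) / (4 * c)])"

lemma alg1: "(c::complex) \<noteq> 0 \<Longrightarrow> e \<noteq> 0 \<Longrightarrow> P * Q * R / 4 = (c * e) * (P * (Q / e) * R / (4 * c))"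
  by (simp add: field_simps)
lemma alg2: "(c::complex) \<noteq> 0 \<Longrightarrow> e \<noteq> 0 \<Longrightarrow> P * Q * R / 4 = (c * e) * (P * Q * (R / e) / (4 * c))"
  by (simp add: field_simps)

lemma val2: "(w::complex) \<noteq> 0 \<Longrightarrow> w * (-1 - 1) * (- (\<i> * t)) / (4 * (w * \<i> / 2)) = t"
  by (simp add: field_simps)
lemma val3: "(w::complex) \<noteq> 0 \<Longrightarrow> w * (- (\<i> * t)) * (-1 - 1) / (4 * (w * \<i> / 2)) = t"
  by (simp add: field_simps)

lemma Drot_qv:
  assumes z: "exp (\<i> * complex_of_real q1) + 1 \<noteq> 0" and e: "\<epsilon> \<noteq> 0"
  shows "Drot (qv q1 \<theta> \<epsilon>) = (\<chi> m. ((exp (\<i> * complex_of_real q1) + 1) * \<i> / 2 * complex_of_real \<epsilon>) * Wv q1 \<theta> \<epsilon> $ m)"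
proof -
  let ?z = "exp (\<i> * complex_of_real q1)"
  let ?c = "(?z + 1) * \<i> / 2"
  have c: "?c \<noteq> 0" using z by simp
  have e': "complex_of_real \<epsilon> \<noteq> 0" using e by simp
  have a: "- exp (\<i> * complex_of_real x) + 1 = 1 - exp (\<i> * complex_of_real x)"
       "- exp (\<i> * complex_of_real x) - 1 = -1 - exp (\<i> * complex_of_real x)" for x
    by simp_all
  show ?thesis
    unfolding Drot_def qv_def Wv_def Let_def vec_eq_iff forall_3
    apply (simp only: vector_3 vec_lambda_beta E_shift a)
    using alg1[OF c e'] alg2[OF c e'] by blast
qed

definition nv :: "real \<Rightarrow> real^3" where "nv \<theta> = vector [0, cos \<theta>, sin \<theta>]"

lemma Wv_lim:
  assumes z: "exp (\<i> * complex_of_real q1) + 1 \<noteq> 0"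
  shows "((\<lambda>\<epsilon>. Wv q1 \<theta> \<epsilon> $ m) \<longlongrightarrow> (\<chi> m. complex_of_real (nv \<theta> $ m)) $ m) (at_right 0)"
proof -
  let ?z = "exp (\<i> * complex_of_real q1)"
  have "\<forall>m. ((\<lambda>\<epsilon>. Wv q1 \<theta> \<epsilon> $ m) \<longlongrightarrow> (\<chi> m. complex_of_real (nv \<theta> $ m)) $ m) (at_right 0)"
    unfolding forall_3
  proof (intro conjI)
    have c4: "4 * ((?z + 1) * \<i> / 2) \<noteq> 0" using z by simp
    have "((\<lambda>\<epsilon>. Wv q1 \<theta> \<epsilon> $ 1) \<longlongrightarrow> (?z - 1) * (- (\<i> * complex_of_real (sin \<theta>))) * (1 - 1) / (4 * ((?z + 1) * \<i> / 2))) (at_right 0)"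
      unfolding Wv_def Let_def vector_3
      by (intro tendsto_intros u_lim E_lim c4)
    moreover have "(?z - 1) * (- (\<i> * complex_of_real (sin \<theta>))) * (1 - 1) / (4 * ((?z + 1) * \<i> / 2)) = 0"
      by simp
    ultimately show "((\<lambda>\<epsilon>. Wv q1 \<theta> \<epsilon> $ 1) \<longlongrightarrow> (\<chi> m. complex_of_real (nv \<theta> $ m)) $ 1) (at_right 0)"
      by (simp add: nv_def)
    have "((\<lambda>\<epsilon>. Wv q1 \<theta> \<epsilon> $ 2) \<longlongrightarrow> (?z + 1) * (-1 - 1) * (- (\<i> * complex_of_real (cos \<theta>))) / (4 * ((?z + 1) * \<i> / 2))) (at_right 0)"
      unfolding Wv_def Let_def vector_3
      by (intro tendsto_intros u_lim E_lim c4)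
    thus "((\<lambda>\<epsilon>. Wv q1 \<theta> \<epsilon> $ 2) \<longlongrightarrow> (\<chi> m. complex_of_real (nv \<theta> $ m)) $ 2) (at_right 0)"
      using z val2[OF z] val3[OF z] by (simp add: nv_def)
    have "((\<lambda>\<epsilon>. Wv q1 \<theta> \<epsilon> $ 3) \<longlongrightarrow> (?z + 1) * (- (\<i> * complex_of_real (sin \<theta>))) * (-1 - 1) / (4 * ((?z + 1) * \<i> / 2))) (at_right 0)"
      unfolding Wv_def Let_def vector_3
      by (intro tendsto_intros u_lim E_lim c4)
    thus "((\<lambda>\<epsilon>. Wv q1 \<theta> \<epsilon> $ 3) \<longlongrightarrow> (\<chi> m. complex_of_real (nv \<theta> $ m)) $ 3) (at_right 0)"
      using z val2[OF z] val3[OF z] by (simp add: nv_def)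
  qed
  thus ?thesis by blast
qed

lemma Mw_ofreal: "Mw L (\<chi> m. complex_of_real (n $ m)) = (\<chi> j k. complex_of_real (acoustic L n $ j $ k))"
  unfolding Mw_def acoustic_def by (simp add: vec_eq_iff mult_ac)

lemma det_ofreal: "det (\<chi> j k. complex_of_real (K $ j $ k)) = complex_of_real (det (K::real^3^3))"
  unfolding det_3 by simp

lemma inv3_ofreal: "inv3 (\<chi> j k. complex_of_real (K $ j $ k)) = (\<chi> j k. complex_of_real (inv3 (K::real^3^3) $ j $ k))"
  unfolding vec_eq_iff forall_3 inv3_def by simp

lemma matrix_inv_ofreal:
  assumes "det (K::real^3^3) \<noteq> 0"
  shows "matrix_inv (\<chi> j k. complex_of_real (K $ j $ k)) = (\<chi> j k. complex_of_real (matrix_inv K $ j $ k))"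
proof -
  have d: "det (\<chi> j k. complex_of_real (K $ j $ k)) \<noteq> 0" using assms by (simp add: det_ofreal)
  show ?thesis unfolding matrix_inv3[OF d] matrix_inv3[OF assms] inv3_ofreal det_ofreal
    by (simp add: vec_eq_iff)
qed

lemma Gw_ofreal:
  assumes "det (acoustic L n) \<noteq> 0"
  shows "Gw L (\<chi> m. complex_of_real (n $ m)) i j k l = complex_of_real (Gamma_op L n i j k l)"
  unfolding Gw_def Gamma_op_def Let_def Mw_ofreal matrix_inv_ofreal[OF assms]
  by simp

lemma nv_ne0: "nv \<theta> \<noteq> 0"
proof
  assume "nv \<theta> = 0"
  hence "cos \<theta> = 0" "sin \<theta> = 0" unfolding nv_def vec_eq_iff by (auto dest: spec[of _ 2] spec[of _ 3])
  thus False using sin_cos_squared_add[of \<theta>] by simp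
qed

lemma part1:
  fixes L :: tensor4
  assumes minor: "tensor_minor_sym L" and posdef: "tensor_pos_def_sym L"
    and q1: "\<forall>m::int. q1 \<noteq> pi + 2 * pi * of_int m"
  shows "((\<lambda>\<epsilon>. Grot L (qv q1 \<theta> \<epsilon>) i j k l) \<longlongrightarrow> complex_of_real (Gamma_op L (nv \<theta>) i j k l)) (at_right 0)"
proof -
  have z: "exp (\<i> * complex_of_real q1) + 1 \<noteq> 0" by (rule exp_ne_m1[OF q1])
  have dK: "det (acoustic L (nv \<theta>)) \<noteq> 0" by (rule acoustic_det[OF minor posdef nv_ne0])
  have d0: "det (Mw L (\<chi> m. complex_of_real (nv \<theta> $ m))) \<noteq> 0"
    unfolding Mw_ofreal det_ofreal using dK by simp
  have lim: "((\<lambda>\<epsilon>. Gw L (Wv q1 \<theta> \<epsilon>) i j k l) \<longlongrightarrow> Gw L (\<chi> m. complex_of_real (nv \<theta> $ m)) i j k l) (at_right 0)"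
    by (rule Gw_tendsto[OF Wv_lim[OF z] d0])
  have ev: "eventually (\<lambda>\<epsilon>. Gw L (Wv q1 \<theta> \<epsilon>) i j k l = Grot L (qv q1 \<theta> \<epsilon>) i j k l) (at_right 0)"
    using det_Mw_eventually[OF Wv_lim[OF z] d0] eventually_at_right_less[of "0::real"]
  proof eventually_elim
    case (elim \<epsilon>)
    hence c: "(exp (\<i> * complex_of_real q1) + 1) * \<i> / 2 * complex_of_real \<epsilon> \<noteq> 0" using z by simp
    have "Drot (qv q1 \<theta> \<epsilon>) = (\<chi> m. ((exp (\<i> * complex_of_real q1) + 1) * \<i> / 2 * complex_of_real \<epsilon>) * Wv q1 \<theta> \<epsilon> $ m)"
      using Drot_qv[OF z, of \<epsilon>] elim by simp
    then show ?case unfolding Grot_Gw by (simp only: Gw_scale[OF c elim(1)])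
  qed
  show ?thesis using Lim_transform_eventually[OF lim ev] by (simp add: Gw_ofreal[OF dK])
qed




lemma K_iso:
  "acoustic (isotropic_tensor lam mu) (nv \<theta>) = (\<chi> j k. (if j = k then mu else 0) + (lam + mu) * nv \<theta> $ j * nv \<theta> $ k)"
proof -
  have cs: "(cos \<theta>)^2 + (sin \<theta>)^2 = 1" by simp
  show ?thesis
    unfolding vec_eq_iff forall_3 acoustic_def isotropic_tensor_def nv_def sum_3
    apply (simp add: algebra_simps)
    using cs by algebra
qed




lemma inv_iso:
  assumes mu: "mu > 0" and l: "lam + 2 * mu > 0"
  shows "matrix_inv (acoustic (isotropic_tensor lam mu) (nv \<theta>))
    = (\<chi> j k. ((if j = k then 1 else 0) - (lam + mu) / (lam + 2 * mu) * nv \<theta> $ j * nv \<theta> $ k) / mu)"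
proof -
  have cs: "(cos \<theta>)^2 + (sin \<theta>)^2 = 1" by simp
  have m0: "mu \<noteq> 0" and l0: "lam + 2 * mu \<noteq> 0" using mu l by auto
  define a where "a = (lam + mu) / (lam + 2 * mu)"
  have ha: "a * (lam + 2 * mu) = lam + mu" unfolding a_def using l0 by simp
  have "acoustic (isotropic_tensor lam mu) (nv \<theta>) ** (\<chi> j k. ((if j = k then 1 else 0) - a * nv \<theta> $ j * nv \<theta> $ k) / mu) = mat 1"
    unfolding K_iso
    unfolding vec_eq_iff forall_3 matrix_matrix_mult_def mat_def nv_def sum_3
    apply (simp add: field_simps m0)
    using cs ha by algebra
  thus ?thesis unfolding a_def using matrix_left_right_inverse matrix_inv_unique by blast
qed

lemma gamma_iso:
  assumes mu: "mu > 0" and l: "3 * lam + 2 * mu > 0"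
  shows "Gamma_op (isotropic_tensor lam mu) (nv \<theta>) 2 2 2 3
     = cos \<theta> * sin \<theta> / (2 * mu) * (1 - (cos \<theta>)^2 / (1 - lam / (2 * (lam + mu))))"
proof -
  have l2: "lam + 2 * mu > 0" and l1: "lam + mu > 0" using mu l by auto
  have m0: "mu \<noteq> 0" and l0: "lam + 2 * mu \<noteq> 0" and l10: "lam + mu \<noteq> 0" using l1 l2 mu by auto
  have e: "1 - lam / (2 * (lam + mu)) = (lam + 2 * mu) / (2 * (lam + mu))" using l1 by (simp add: field_simps)
  define a where "a = (lam + mu) / (lam + 2 * mu)"
  have inv: "matrix_inv (acoustic (isotropic_tensor lam mu) (nv \<theta>))
    = (\<chi> j k. ((if j = k then 1 else 0) - a * nv \<theta> $ j * nv \<theta> $ k) / mu)"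
    unfolding a_def by (rule inv_iso[OF mu l2])
  have L: "Gamma_op (isotropic_tensor lam mu) (nv \<theta>) 2 2 2 3 = cos \<theta> * sin \<theta> * (1 - 2 * a * (cos \<theta>)^2) / (2 * mu)"
    unfolding Gamma_op_def Let_def inv using m0 by (simp add: nv_def field_simps power2_eq_square)
  have R: "(cos \<theta>)^2 / (1 - lam / (2 * (lam + mu))) = 2 * a * (cos \<theta>)^2"
    unfolding e a_def using l0 l10 by (simp add: field_simps)
  show ?thesis unfolding L R using m0 by (simp add: field_simps)
qed




lemma qv_filterlim:
  assumes z: "exp (\<i> * complex_of_real q1) + 1 \<noteq> 0" and ct: "cos \<theta> \<noteq> 0"
  shows "filterlim (qv q1 \<theta>) (at (vector [q1, pi, pi]) within {q. Drot q \<noteq> 0}) (at_right 0)"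
proof (rule filterlim_at_withinI)
  have "\<forall>i. ((\<lambda>x. qv q1 \<theta> x $ i) \<longlongrightarrow> (vector [q1, pi, pi] :: real^3) $ i) (at_right 0)"
    unfolding forall_3 qv_def vector_3
    by (auto intro!: tendsto_eq_intros)
  thus "filterlim (qv q1 \<theta>) (nhds (vector [q1, pi, pi])) (at_right 0)"
    by (intro vec_tendstoI) blast
  have l2: "((\<lambda>\<epsilon>. Wv q1 \<theta> \<epsilon> $ 2) \<longlongrightarrow> complex_of_real (cos \<theta>)) (at_right 0)"
    using Wv_lim[OF z, of \<theta> 2] by (simp add: nv_def)
  have ev: "eventually (\<lambda>\<epsilon>. Wv q1 \<theta> \<epsilon> $ 2 \<noteq> 0) (at_right 0)"
    using tendsto_imp_eventually_ne[OF l2] ct by simp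
  show "eventually (\<lambda>\<epsilon>. qv q1 \<theta> \<epsilon> \<in> {q. Drot q \<noteq> 0} - {vector [q1, pi, pi]}) (at_right 0)"
    using ev eventually_at_right_less[of "0::real"]
  proof eventually_elim
    case (elim \<epsilon>)
    have "Drot (qv q1 \<theta> \<epsilon>) $ 2 = ((exp (\<i> * complex_of_real q1) + 1) * \<i> / 2 * complex_of_real \<epsilon>) * Wv q1 \<theta> \<epsilon> $ 2"
      using Drot_qv[OF z, of \<epsilon> \<theta>] elim by simp
    hence d: "Drot (qv q1 \<theta> \<epsilon>) \<noteq> 0" using elim z by auto
    have "qv q1 \<theta> \<epsilon> $ 3 \<noteq> (vector [q1, pi, pi] :: real^3) $ 3"
      using elim ct unfolding qv_def by simp
    hence "qv q1 \<theta> \<epsilon> \<noteq> vector [q1, pi, pi]" by metis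
    thus ?case using d by simp
  qed
qed

theorem mainTheorem10:
  fixes L :: tensor4 and q1 \<theta> :: real
  assumes minor: "tensor_minor_sym L"
    and major: "tensor_major_sym L"
    and posdef: "tensor_pos_def_sym L"
    and q1: "\<forall>m::int. q1 \<noteq> pi + 2 * pi * of_int m"
  shows "(\<forall>i j k l.
           ((\<lambda>\<epsilon>. Grot L (vector [q1, pi + \<epsilon> * sin \<theta>, pi + \<epsilon> * cos \<theta>]) i j k l)
             \<longlongrightarrow> complex_of_real (Gamma_op L (vector [0, cos \<theta>, sin \<theta>]) i j k l)) (at_right 0))
       \<and> (\<forall>lam mu. mu > 0 \<longrightarrow> 3 * lam + 2 * mu > 0 \<longrightarrow> L = isotropic_tensor lam mu \<longrightarrow>
           (let \<nu> = lam / (2 * (lam + mu)) in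
             ((\<lambda>\<epsilon>. Grot L (vector [q1, pi + \<epsilon> * sin \<theta>, pi + \<epsilon> * cos \<theta>]) 2 2 2 3)
               \<longlongrightarrow> complex_of_real (cos \<theta> * sin \<theta> / (2 * mu) * (1 - (cos \<theta>)^2 / (1 - \<nu>))))
               (at_right 0))
           \<and> \<not> (\<exists>c. ((\<lambda>q. Grot L q 2 2 2 3) \<longlongrightarrow> c)
                    (at (vector [q1, pi, pi]) within {q. Drot q \<noteq> 0})))"
proof -
  have P1: "((\<lambda>\<epsilon>. Grot L (qv q1 t \<epsilon>) i j k l) \<longlongrightarrow> complex_of_real (Gamma_op L (nv t) i j k l)) (at_right 0)" for t i j k l
    by (rule part1[OF minor posdef q1])
  have z: "exp (\<i> * complex_of_real q1) + 1 \<noteq> 0" by (rule exp_ne_m1[OF q1])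
  show ?thesis
  proof (intro conjI allI impI)
    fix i j k l
    show "((\<lambda>\<epsilon>. Grot L (vector [q1, pi + \<epsilon> * sin \<theta>, pi + \<epsilon> * cos \<theta>]) i j k l)
             \<longlongrightarrow> complex_of_real (Gamma_op L (vector [0, cos \<theta>, sin \<theta>]) i j k l)) (at_right 0)"
      using P1[of \<theta> i j k l] unfolding qv_def nv_def .
  next
    fix lam mu :: real
    assume mu: "mu > 0" and l: "3 * lam + 2 * mu > 0" and LI: "L = isotropic_tensor lam mu"
    have GI: "Gamma_op L (nv t) 2 2 2 3 = cos t * sin t / (2 * mu) * (1 - (cos t)^2 / (1 - lam / (2 * (lam + mu))))" for t
      unfolding LI by (rule gamma_iso[OF mu l])
    show "let \<nu> = lam / (2 * (lam + mu)) in
             ((\<lambda>\<epsilon>. Grot L (vector [q1, pi + \<epsilon> * sin \<theta>, pi + \<epsilon> * cos \<theta>]) 2 2 2 3)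
               \<longlongrightarrow> complex_of_real (cos \<theta> * sin \<theta> / (2 * mu) * (1 - (cos \<theta>)^2 / (1 - \<nu>))))
               (at_right 0)"
      unfolding Let_def using P1[of \<theta> 2 2 2 3] unfolding qv_def GI .
    show "\<not> (\<exists>c. ((\<lambda>q. Grot L q 2 2 2 3) \<longlongrightarrow> c) (at (vector [q1, pi, pi]) within {q. Drot q \<noteq> 0}))"
    proof
      assume "\<exists>c. ((\<lambda>q. Grot L q 2 2 2 3) \<longlongrightarrow> c) (at (vector [q1, pi, pi]) within {q. Drot q \<noteq> 0})"
      then obtain C where hC: "((\<lambda>q. Grot L q 2 2 2 3) \<longlongrightarrow> C) (at (vector [q1, pi, pi]) within {q. Drot q \<noteq> 0})" by blast
      have val: "C = complex_of_real (cos t * sin t / (2 * mu) * (1 - (cos t)^2 / (1 - lam / (2 * (lam + mu)))))"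
        if ct: "cos t \<noteq> 0" for t
      proof -
        have "((\<lambda>\<epsilon>. Grot L (qv q1 t \<epsilon>) 2 2 2 3) \<longlongrightarrow> C) (at_right 0)"
          using filterlim_compose[OF hC qv_filterlim[OF z ct]] by (simp add: o_def)
        from tendsto_unique[OF _ this P1[of t 2 2 2 3]] show ?thesis by (simp add: GI)
      qed
      have v0: "C = 0" using val[of 0] by simp
      have "cos (pi/4) \<noteq> 0" by (simp add: cos_45)
      from val[OF this] v0
      have "complex_of_real (cos (pi/4) * sin (pi/4) / (2 * mu) * (1 - (cos (pi/4))^2 / (1 - lam / (2 * (lam + mu))))) = 0"
        by metis
      hence "cos (pi/4) * sin (pi/4) / (2 * mu) * (1 - (cos (pi/4))^2 / (1 - lam / (2 * (lam + mu)))) = 0"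
        by (simp only: of_real_eq_0_iff)
      hence "(sqrt 2 / 2) * (sqrt 2 / 2) / (2 * mu) * (1 - (sqrt 2 / 2)^2 / (1 - lam / (2 * (lam + mu)))) = 0"
        by (simp only: cos_45 sin_45)
      moreover have "(sqrt 2 / 2) * (sqrt 2 / 2) = (1/2::real)" "(sqrt 2 / 2)^2 = (1/2::real)"
        by (simp_all add: power2_eq_square)
      ultimately have "1 - (1/2) / (1 - lam / (2 * (lam + mu))) = 0" using mu by simp
      moreover have "lam + mu > 0" using mu l by simp
      ultimately show False using mu by (simp add: field_simps split: if_splits)
    qed
  qed
qed


end
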